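(* Let $d\ge 2$ and $R \subseteq \{0,1,\dots,d-1\}$ with $0 \in R$. Let $m^\star \in \mathcal{M}^s_d(R)$ be an optimal symmetric $R$-estimator, i.e. $\|m^\star - \textsc{max}\|_\infty = \min_{m\in\mathcal{M}_d^s(R)}\|m-\textsc{max}\|_\infty$. For $0\le\epsilon < \mathrm{err}(R)/2$ let $$W(\epsilon; R) = \{x \in [0,1]^d : |x_{(1)} - m^\star(x)| \ge \epsilon\}.$$ Then $\mathrm{vol}(W(\epsilon; R)) \ge (\mathrm{err}(R)/2 - \epsilon)^d$, where $\mathrm{vol}$ is Lebesgue measure on $[0,1]^d$.
   Context: For $x\in\mathbb{R}^d$ and nonempty $A\subseteq\{1,\dots,d\}$, $s(x;A)=\max\{x_j:j\in A\}$. $C(k,r,d)$ is the $k$-th $r$-element subset of $\{1,\dots,d\}$ in lexicographic order. For $R\subseteq\{0,\dots,d-1\}$, $\mathcal{M}_d(R)$ is the set of functions $x\mapsto \beta_0+\sum_{r\in R\setminus\{0\}}\sum_{j=1}^{\binom dr}\beta_r^j s(x;C(j,r,d))$ with real coefficients, the intercept $\beta_0$ being present iff $0\in R$. $\mathcal{M}_d^s(R)$ is the subset of $\mathcal{M}_d(R)$ of functions invariant under every permutation of their $d$ arguments. $\textsc{max}(x)=\max_i x_i = x_{(1)}$, $\|\cdot\|_\infty$ is the sup norm over $[0,1]^d$, and $\mathrm{err}(R)=\min_{m\in\mathcal{M}_d(R)}\|m-\textsc{max}\|_\infty$. *)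

theory Defs
  imports "HOL-Analysis.Analysis"
begin

text \<open>Points of R^d are vectors x :: real^'n, with d = CARD('n).\<close>

definition unit_cube :: "(real^'n) set" where
  "unit_cube = {x. \<forall>i. 0 \<le> x$i \<and> x$i \<le> 1}"

definition smax :: "real^'n \<Rightarrow> 'n set \<Rightarrow> real" where
  "smax x A = Max ((\<lambda>j. x$j) ` A)"

definition maxf :: "real^'n \<Rightarrow> real" where
  "maxf x = Max (range (\<lambda>i. x$i))"

text \<open>M_d(R): the r-element subsets are indexed directly by the subsets themselves
 (equivalent to enumerating them as C(j,r,d) in lexicographic order).\<close>
definition Mclass :: "nat set \<Rightarrow> (real^'n \<Rightarrow> real) set" where
  "Mclass R = {m. \<exists>(b0::real) (b::'n set \<Rightarrow> real).
      m = (\<lambda>x. (if 0 \<in> R then b0 else 0) +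
              (\<Sum>r\<in>R - {0}. \<Sum>A\<in>{A::'n set. card A = r}. b A * smax x A))}"

definition symmetric_fun :: "(real^'n \<Rightarrow> real) \<Rightarrow> bool" where
  "symmetric_fun m \<longleftrightarrow> (\<forall>p x. p permutes (UNIV::'n set) \<longrightarrow> m (\<chi> i. x $ p i) = m x)"

definition Msym :: "nat set \<Rightarrow> (real^'n \<Rightarrow> real) set" where
  "Msym R = {m \<in> Mclass R. symmetric_fun m}"

definition supnorm :: "(real^'n \<Rightarrow> real) \<Rightarrow> real" where
  "supnorm f = (SUP x\<in>unit_cube. \<bar>f x\<bar>)"

definition err :: "('n::finite) itself \<Rightarrow> nat set \<Rightarrow> real" where
  "err _ R = Inf ((\<lambda>m. supnorm (\<lambda>x. m x - maxf x)) ` (Mclass R :: (real^'n \<Rightarrow> real) set))"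

definition Wset :: "(real^'n \<Rightarrow> real) \<Rightarrow> real \<Rightarrow> (real^'n) set" where
  "Wset mstar eps = {x \<in> unit_cube. \<bar>maxf x - mstar x\<bar> \<ge> eps}"

end

theory Submission
  imports Defs
begin

definition como :: "real^'n \<Rightarrow> real^'n \<Rightarrow> bool" where
  "como p q \<longleftrightarrow> (\<forall>i j. p$i < p$j \<longrightarrow> q$i \<le> q$j) \<and> (\<forall>i j. q$i < q$j \<longrightarrow> p$i \<le> p$j)"

lemma smax_affine:
  fixes p q :: "real^'n"
  assumes c: "como p q" and t: "0 \<le> t" "t \<le> 1" and A: "A \<noteq> {}"
  shows "smax ((1-t) *\<^sub>R p + t *\<^sub>R q) A = (1-t) * smax p A + t * smax q A"
proof -
  have fA: "finite A" by simp
  define g where "g = (\<lambda>i. p$i + q$i)"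
  have "Max (g ` A) \<in> g ` A" using A by (intro Max_in) auto
  then obtain j where j1: "j \<in> A" and jm: "g j = Max (g ` A)" by auto
  have j2: "p$i + q$i \<le> p$j + q$j" if "i \<in> A" for i
  proof -
    have "g i \<le> Max (g ` A)" using that by (intro Max_ge) auto
    then show ?thesis using jm unfolding g_def by simp
  qed
  note j = j1 j2
  have pj: "p$i \<le> p$j" and qj: "q$i \<le> q$j" if "i \<in> A" for i
  proof -
    show "p$i \<le> p$j"
    proof (rule ccontr)
      assume "\<not> p$i \<le> p$j" then have "p$j < p$i" by simp
      then have "q$j \<le> q$i" using c unfolding como_def by blast
      then show False using j(2)[OF that] \<open>p$j < p$i\<close> by simp
    qed
    show "q$i \<le> q$j"
    proof (rule ccontr)
      assume "\<not> q$i \<le> q$j" then have "q$j < q$i" by simp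
      then have "p$j \<le> p$i" using c unfolding como_def by blast
      then show False using j(2)[OF that] \<open>q$j < q$i\<close> by simp
    qed
  qed
  have "smax p A = p$j" unfolding smax_def using j pj by (intro Max_eqI) auto
  moreover have "smax q A = q$j" unfolding smax_def using j qj by (intro Max_eqI) auto
  moreover have "smax ((1-t) *\<^sub>R p + t *\<^sub>R q) A = (1-t) * p$j + t * q$j"
    unfolding smax_def
  proof (intro Max_eqI)
    fix y assume "y \<in> (\<lambda>i. ((1-t) *\<^sub>R p + t *\<^sub>R q)$i) ` A"
    then obtain i where i: "i \<in> A" "y = (1-t) * p$i + t * q$i" by auto
    have "(1-t) * p$i \<le> (1-t) * p$j" using pj[OF i(1)] t by (intro mult_left_mono) auto
    moreover have "t * q$i \<le> t * q$j" using qj[OF i(1)] t by (intro mult_left_mono) auto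
    ultimately show "y \<le> (1-t) * p$j + t * q$j" using i by simp
  next
    show "(1-t) * p$j + t * q$j \<in> (\<lambda>i. ((1-t) *\<^sub>R p + t *\<^sub>R q)$i) ` A" using j by auto
  qed auto
  ultimately show ?thesis by simp
qed

lemma maxf_smax: "maxf x = smax x UNIV"
  unfolding maxf_def smax_def by simp

lemma maxf_affine:
  assumes "como p q" "0 \<le> t" "t \<le> 1"
  shows "maxf ((1-t) *\<^sub>R p + t *\<^sub>R q) = (1-t) * maxf p + t * maxf q"
  using smax_affine[OF assms, of UNIV] by (simp add: maxf_smax)

lemma dsum:
  fixes F G H :: "'a set \<Rightarrow> real"
  assumes "\<And>r A. r \<in> R - {0} \<Longrightarrow> card A = r \<Longrightarrow> F A = (1-t) * G A + t * H A"
  shows "(\<Sum>r\<in>R - {0}. \<Sum>A\<in>{A::'a set. card A = r}. F A)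
       = (1-t) * (\<Sum>r\<in>R - {0}. \<Sum>A\<in>{A::'a set. card A = r}. G A)
         + t * (\<Sum>r\<in>R - {0}. \<Sum>A\<in>{A::'a set. card A = r}. H A)"
proof -
  have "(\<Sum>r\<in>R - {0}. \<Sum>A\<in>{A::'a set. card A = r}. F A)
      = (\<Sum>r\<in>R - {0}. \<Sum>A\<in>{A::'a set. card A = r}. (1-t) * G A + t * H A)"
    by (rule sum.cong[OF refl], rule sum.cong[OF refl], rule assms) auto
  also have "\<dots> = (1-t) * (\<Sum>r\<in>R - {0}. \<Sum>A\<in>{A::'a set. card A = r}. G A)
         + t * (\<Sum>r\<in>R - {0}. \<Sum>A\<in>{A::'a set. card A = r}. H A)"
    by (simp only: sum.distrib sum_distrib_left)
  finally show ?thesis .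
qed

lemma Mclass_affine:
  assumes m: "m \<in> Mclass R" and c: "como p q" and t: "0 \<le> t" "t \<le> 1"
  shows "m ((1-t) *\<^sub>R p + t *\<^sub>R q) = (1-t) * m p + t * m q"
proof -
  obtain b0 b where mdef: "m = (\<lambda>x. (if 0 \<in> R then b0 else 0) +
              (\<Sum>r\<in>R - {0}. \<Sum>A\<in>{A::'a set. card A = r}. b A * smax x A))"
    using m unfolding Mclass_def by blast
  have inner: "b A * smax ((1-t) *\<^sub>R p + t *\<^sub>R q) A = (1-t) * (b A * smax p A) + t * (b A * smax q A)"
    if "r \<in> R - {0}" "card A = r" for r A
  proof -
    have "A \<noteq> {}" using that by auto
    then have e: "smax ((1-t) *\<^sub>R p + t *\<^sub>R q) A = (1-t) * smax p A + t * smax q A"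
      by (rule smax_affine[OF c t])
    show ?thesis unfolding e by (simp add: algebra_simps)
  qed
  have S: "(\<Sum>r\<in>R - {0}. \<Sum>A\<in>{A::'a set. card A = r}. b A * smax ((1-t) *\<^sub>R p + t *\<^sub>R q) A) = (1-t) * (\<Sum>r\<in>R - {0}. \<Sum>A\<in>{A::'a set. card A = r}. b A * smax p A)
      + t * (\<Sum>r\<in>R - {0}. \<Sum>A\<in>{A::'a set. card A = r}. b A * smax q A)"
    by (rule dsum) (rule inner)
  define c where "c = (if 0 \<in> R then b0 else 0)"
  have cc: "\<And>a b::real. c + ((1-t)*a + t*b) = (1-t)*(c+a) + t*(c+b)" by (simp add: algebra_simps)
  show ?thesis unfolding mdef c_def[symmetric] S by (rule cc)
qed


definition vert :: "(real^'n) set" where "vert = {v. \<forall>i. v$i = 0 \<or> v$i = 1}"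

definition Dv :: "real^'n \<Rightarrow> real set" where
  "Dv x = (\<lambda>i. x$i) ` {i. 0 < x$i \<and> x$i < 1}"

lemma vertex_bound:
  fixes F :: "real^'n \<Rightarrow> real"
  assumes aff: "\<And>p q t. p \<in> unit_cube \<Longrightarrow> q \<in> unit_cube \<Longrightarrow> como p q \<Longrightarrow> 0 \<le> t \<Longrightarrow> t \<le> 1
      \<Longrightarrow> F ((1-t) *\<^sub>R p + t *\<^sub>R q) = (1-t) * F p + t * F q"
  shows "x \<in> unit_cube \<Longrightarrow> \<exists>u\<in>vert. \<bar>F x\<bar> \<le> \<bar>F u\<bar>"
proof (induction "card (Dv x)" arbitrary: x rule: less_induct)
  case less
  have cx: "0 \<le> x$i" "x$i \<le> 1" for i using less.prems unfolding unit_cube_def by auto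
  have finD: "finite (Dv x)" unfolding Dv_def by simp
  show ?case
  proof (cases "Dv x = {}")
    case True
    have "x \<in> vert" unfolding vert_def
    proof (intro CollectI allI)
      fix i
      have "\<not> (0 < x$i \<and> x$i < 1)" using True unfolding Dv_def by auto
      then show "x$i = 0 \<or> x$i = 1" using cx[of i] by auto
    qed
    then show ?thesis by auto
  next
    case False
    then obtain a where aD: "a \<in> Dv x" by auto
    then have a01: "0 < a" "a < 1" unfolding Dv_def by auto
    define L where "L = insert 0 ((\<lambda>i. x$i) ` {i. x$i < a})"
    define H where "H = insert 1 ((\<lambda>i. x$i) ` {i. x$i > a})"
    define lo where "lo = Max L"
    define hi where "hi = Min H"
    have finL: "finite L" and finH: "finite H" unfolding L_def H_def by auto
    have loL: "lo \<in> L" unfolding lo_def using finL by (intro Max_in) (auto simp: L_def)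
    have hiH: "hi \<in> H" unfolding hi_def using finH by (intro Min_in) (auto simp: H_def)
    have lo0: "0 \<le> lo" unfolding lo_def using finL by (intro Max_ge) (auto simp: L_def)
    have hi1: "hi \<le> 1" unfolding hi_def using finH by (intro Min_le) (auto simp: H_def)
    have loa: "lo < a" using loL a01 unfolding L_def by auto
    have ahi: "a < hi" using hiH a01 unfolding H_def by auto
    have belowlo: "x$i \<le> lo" if "x$i < a" for i
      unfolding lo_def using finL that by (intro Max_ge) (auto simp: L_def)
    have abovehi: "hi \<le> x$i" if "x$i > a" for i
      unfolding hi_def using finH that by (intro Min_le) (auto simp: H_def)
    define xl where "xl = (\<chi> i. if x$i = a then lo else x$i)"
    define xh where "xh = (\<chi> i. if x$i = a then hi else x$i)"
    have xl_c: "xl \<in> unit_cube" unfolding unit_cube_def xl_def using cx lo0 loa a01 by auto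
    have xh_c: "xh \<in> unit_cube" unfolding unit_cube_def xh_def using cx hi1 ahi a01 by auto
    have cm: "como xl xh" unfolding como_def
    proof (intro conjI allI impI)
      fix i j
      have bi: "x$i < a \<Longrightarrow> x$i \<le> lo" "x$i > a \<Longrightarrow> hi \<le> x$i" using belowlo abovehi by auto
      have bj: "x$j < a \<Longrightarrow> x$j \<le> lo" "x$j > a \<Longrightarrow> hi \<le> x$j" using belowlo abovehi by auto
      show "xh$i \<le> xh$j" if "xl$i < xl$j"
        using that bi bj loa ahi unfolding xl_def xh_def
        by (cases "x$i = a"; cases "x$j = a"; cases "x$i < a"; cases "x$j < a") auto
      show "xl$i \<le> xl$j" if "xh$i < xh$j"
        using that bi bj loa ahi unfolding xl_def xh_def
        by (cases "x$i = a"; cases "x$j = a"; cases "x$i < a"; cases "x$j < a") auto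
    qed
    define mu where "mu = (a - lo) / (hi - lo)"
    have mu01: "0 \<le> mu" "mu \<le> 1" unfolding mu_def using loa ahi by (auto simp: field_simps)
    have xeq: "x = (1-mu) *\<^sub>R xl + mu *\<^sub>R xh"
    proof -
      have h: "mu * (hi - lo) = a - lo" unfolding mu_def using loa ahi by simp
      have "(1-mu) * lo + mu * hi = lo + mu * (hi - lo)" by (simp add: algebra_simps)
      then have "(1-mu) * lo + mu * hi = a" using h by simp
      then show ?thesis unfolding xl_def xh_def by (simp add: vec_eq_iff algebra_simps)
    qed
    have sub: "Dv y \<subset> Dv x" if yv: "y = xl \<or> y = xh" for y
    proof -
      have "Dv y \<subseteq> Dv x - {a}"
      proof
        fix z assume "z \<in> Dv y"
        then obtain i where zi: "z = y$i" "0 < y$i" "y$i < 1" unfolding Dv_def by auto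
        show "z \<in> Dv x - {a}"
        proof (cases "x$i = a")
          case True
          show ?thesis
          proof (cases "y = xl")
            case True
            then have "z = lo" using zi \<open>x$i = a\<close> unfolding xl_def by simp
            then have "z \<noteq> 0" using zi by simp
            then obtain k where "x$k < a" "z = x$k" using loL \<open>z = lo\<close> unfolding L_def by auto
            then show ?thesis using zi unfolding Dv_def by auto
          next
            case False
            then have "y = xh" using yv by auto
            then have "z = hi" using zi \<open>x$i = a\<close> unfolding xh_def by simp
            then have "z \<noteq> 1" using zi by simp
            then obtain k where "x$k > a" "z = x$k" using hiH \<open>z = hi\<close> unfolding H_def by auto
            then show ?thesis using zi unfolding Dv_def by auto
          qed
        next
          case False
          then have "y$i = x$i" using yv unfolding xl_def xh_def by auto
          then show ?thesis using zi False unfolding Dv_def by auto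
        qed
      qed
      then show ?thesis using aD by auto
    qed
    have "card (Dv xl) < card (Dv x)" using sub[of xl] finD by (intro psubset_card_mono) auto
    then obtain ul where ul: "ul \<in> vert" "\<bar>F xl\<bar> \<le> \<bar>F ul\<bar>" using less.hyps xl_c by blast
    have "card (Dv xh) < card (Dv x)" using sub[of xh] finD by (intro psubset_card_mono) auto
    then obtain uh where uh: "uh \<in> vert" "\<bar>F xh\<bar> \<le> \<bar>F uh\<bar>" using less.hyps xh_c by blast
    have Fx: "F x = (1-mu) * F xl + mu * F xh" unfolding xeq by (rule aff[OF xl_c xh_c cm mu01])
    have "\<bar>F x\<bar> \<le> (1-mu) * \<bar>F xl\<bar> + mu * \<bar>F xh\<bar>"
      unfolding Fx using mu01 by (simp add: abs_triangle_ineq abs_mult order_trans[OF abs_triangle_ineq])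
    also have "\<dots> \<le> (1-mu) * max \<bar>F ul\<bar> \<bar>F uh\<bar> + mu * max \<bar>F ul\<bar> \<bar>F uh\<bar>"
      using mu01 ul uh by (intro add_mono mult_left_mono) auto
    also have "\<dots> = max \<bar>F ul\<bar> \<bar>F uh\<bar>" by (simp add: algebra_simps)
    finally show ?thesis using ul uh by (auto simp: max_def split: if_splits)
  qed
qed


lemma finite_vert: "finite (vert :: (real^'n) set)"
proof -
  have "vert \<subseteq> range (\<lambda>S::'n set. (\<chi> i. if i \<in> S then 1 else 0) :: real^'n)"
  proof
    fix v :: "real^'n" assume "v \<in> vert"
    then have "v = (\<chi> i. if i \<in> {i. v$i = 1} then 1 else 0)"
      unfolding vert_def by (auto simp: vec_eq_iff)
    then show "v \<in> range (\<lambda>S::'n set. (\<chi> i. if i \<in> S then 1 else 0) :: real^'n)" by blast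
  qed
  then show ?thesis by (rule finite_subset) simp
qed

lemma vert_cube: "vert \<subseteq> unit_cube"
proof
  fix x :: "real^'n" assume "x \<in> vert"
  then have "x$i = 0 \<or> x$i = 1" for i unfolding vert_def by auto
  then have "0 \<le> x$i \<and> x$i \<le> 1" for i by (metis order.refl zero_le_one)
  then show "x \<in> unit_cube" unfolding unit_cube_def by auto
qed

lemma sup_attained:
  fixes F :: "real^'n \<Rightarrow> real"
  assumes aff: "\<And>p q t. p \<in> unit_cube \<Longrightarrow> q \<in> unit_cube \<Longrightarrow> como p q \<Longrightarrow> 0 \<le> t \<Longrightarrow> t \<le> 1
      \<Longrightarrow> F ((1-t) *\<^sub>R p + t *\<^sub>R q) = (1-t) * F p + t * F q"
  shows "\<exists>u\<in>vert. supnorm F = \<bar>F u\<bar> \<and> (\<forall>x\<in>unit_cube. \<bar>F x\<bar> \<le> \<bar>F u\<bar>)"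
proof -
  define g where "g = (\<lambda>v. \<bar>F v\<bar>)"
  have ne: "(0::real^'n) \<in> vert" unfolding vert_def by simp
  have "Max (g ` vert) \<in> g ` vert" using finite_vert ne by (intro Max_in) auto
  then obtain u where u: "u \<in> vert" "g u = Max (g ` vert)" by auto
  have um: "\<bar>F v\<bar> \<le> \<bar>F u\<bar>" if "v \<in> vert" for v
  proof -
    have "g v \<le> Max (g ` vert)" using that finite_vert by (intro Max_ge) auto
    then show ?thesis using u unfolding g_def by simp
  qed
  have bd: "\<bar>F x\<bar> \<le> \<bar>F u\<bar>" if xc: "x \<in> unit_cube" for x
  proof -
    obtain v where "v \<in> vert" "\<bar>F x\<bar> \<le> \<bar>F v\<bar>" using vertex_bound[OF aff xc] by blast
    then show ?thesis using um by force
  qed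
  have "supnorm F = \<bar>F u\<bar>" unfolding supnorm_def
    using u(1) vert_cube bd by (intro cSup_eq_maximum) auto
  then show ?thesis using u bd by auto
qed

lemma Mclass_f_affine:
  assumes "m \<in> Mclass R"
  shows "\<And>p q t. p \<in> unit_cube \<Longrightarrow> q \<in> unit_cube \<Longrightarrow> como p q \<Longrightarrow> 0 \<le> t \<Longrightarrow> t \<le> 1
      \<Longrightarrow> m ((1-t) *\<^sub>R p + t *\<^sub>R q) - maxf ((1-t) *\<^sub>R p + t *\<^sub>R q) = (1-t) * (m p - maxf p) + t * (m q - maxf q)"
proof -
  fix p q :: "real^'a" and t :: real
  assume "p \<in> unit_cube" "q \<in> unit_cube" and h: "como p q" "0 \<le> t" "t \<le> 1"
  have e1: "m ((1-t) *\<^sub>R p + t *\<^sub>R q) = (1-t) * m p + t * m q" by (rule Mclass_affine[OF assms h])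
  have e2: "maxf ((1-t) *\<^sub>R p + t *\<^sub>R q) = (1-t) * maxf p + t * maxf q" by (rule maxf_affine[OF h])
  show "m ((1-t) *\<^sub>R p + t *\<^sub>R q) - maxf ((1-t) *\<^sub>R p + t *\<^sub>R q) = (1-t) * (m p - maxf p) + t * (m q - maxf q)"
    unfolding e1 e2 by (simp add: algebra_simps)
qed

lemma smax_meas[measurable]: "(\<lambda>x::real^'n. smax x A) \<in> borel_measurable borel"
  unfolding smax_def
  by (intro borel_measurable_Max finite_subset[of A UNIV] borel_measurable_continuous_onI
      linear_continuous_on bounded_linear_vec_nth) auto

lemma maxf_meas[measurable]: "(\<lambda>x::real^'n. maxf x) \<in> borel_measurable borel"
  unfolding maxf_smax by simp

lemma Mclass_meas:
  assumes "m \<in> Mclass R" shows "m \<in> borel_measurable borel"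
proof -
  obtain b0 b where mdef: "m = (\<lambda>x. (if 0 \<in> R then b0 else 0) +
              (\<Sum>r\<in>R - {0}. \<Sum>A\<in>{A::'a set. card A = r}. b A * smax x A))"
    using assms unfolding Mclass_def by blast
  show ?thesis unfolding mdef by measurable
qed

theorem lemma4:
  fixes R :: "nat set" and mstar :: "real^'n \<Rightarrow> real" and eps :: real
  assumes "CARD('n) \<ge> 2"
    and "R \<subseteq> {..<CARD('n)}" and "0 \<in> R"
    and "mstar \<in> Msym R"
    and "supnorm (\<lambda>x. mstar x - maxf x)
           = Inf ((\<lambda>m. supnorm (\<lambda>x. m x - maxf x)) ` (Msym R :: (real^'n \<Rightarrow> real) set))"
    and "0 \<le> eps" and "eps < err TYPE('n) R / 2"
  shows "emeasure lborel (Wset mstar eps) \<ge> ennreal ((err TYPE('n) R / 2 - eps) ^ CARD('n))"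
proof -
  define e where "e = err TYPE('n) R"
  define f where "f = (\<lambda>x. mstar x - maxf x)"
  have mM: "mstar \<in> Mclass R" using assms(4) unfolding Msym_def by auto
  have supM: "\<exists>u\<in>vert. supnorm (\<lambda>x. m x - maxf x) = \<bar>m u - maxf u\<bar> \<and>
       (\<forall>x\<in>unit_cube. \<bar>m x - maxf x\<bar> \<le> \<bar>m u - maxf u\<bar>)" if "m \<in> Mclass R" for m :: "real^'n \<Rightarrow> real"
    using sup_attained[of "\<lambda>x. m x - maxf x", OF Mclass_f_affine[OF that]] by simp
  have bdd: "bdd_below ((\<lambda>m. supnorm (\<lambda>x. m x - maxf x)) ` (Mclass R :: (real^'n \<Rightarrow> real) set))"
  proof (rule bdd_belowI)
    fix y assume "y \<in> (\<lambda>m. supnorm (\<lambda>x. m x - maxf x)) ` (Mclass R :: (real^'n \<Rightarrow> real) set)"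
    then obtain m :: "real^'n \<Rightarrow> real" where "m \<in> Mclass R" "y = supnorm (\<lambda>x. m x - maxf x)" by blast
    then show "0 \<le> y" using supM by force
  qed
  obtain u where u: "u \<in> vert" "supnorm f = \<bar>f u\<bar>" "\<And>x. x \<in> unit_cube \<Longrightarrow> \<bar>f x\<bar> \<le> \<bar>f u\<bar>"
    using supM[OF mM] unfolding f_def by blast
  define M where "M = \<bar>f u\<bar>"
  have eM: "e \<le> M"
  proof -
    have "e \<le> supnorm f" unfolding e_def err_def f_def using mM bdd by (intro cInf_lower) auto
    then show ?thesis using u unfolding M_def by simp
  qed
  have e_half: "e \<le> 1/2"
  proof -
    define m0 where "m0 = (\<lambda>x::real^'n. 1/2 :: real)"
    have m0M: "m0 \<in> Mclass R" unfolding Mclass_def m0_def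
      by (rule CollectI, rule exI[of _ "1/2"], rule exI[of _ "\<lambda>A. 0"]) (simp add: assms(3))
    obtain v where v: "v \<in> vert" "supnorm (\<lambda>x. m0 x - maxf x) = \<bar>m0 v - maxf v\<bar>"
      using supM[OF m0M] by blast
    have "maxf v \<in> range (\<lambda>i. v$i)" unfolding maxf_def by (intro Max_in) auto
    then have "0 \<le> maxf v \<and> maxf v \<le> 1" using v(1) vert_cube unfolding unit_cube_def by fastforce
    then have "supnorm (\<lambda>x. m0 x - maxf x) \<le> 1/2" using v(2) unfolding m0_def by (auto simp: abs_if)
    moreover have "e \<le> supnorm (\<lambda>x. m0 x - maxf x)" unfolding e_def err_def
      using m0M bdd by (intro cInf_lower) auto
    ultimately show ?thesis by simp
  qed
  define d where "d = e/2 - eps"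
  have d0: "0 < d" and d4: "d \<le> 1/4" using assms(6,7) e_half unfolding d_def e_def by auto
  have key: "eps \<le> (1 - 4*d) * M"
  proof -
    have "(1 - 4*d) * e \<le> (1 - 4*d) * M" using eM d4 by (intro mult_left_mono) auto
    moreover have "0 \<le> (e - 2*eps) * (1 - 2*e)" using assms(7) e_half unfolding e_def
      by (intro mult_nonneg_nonneg) auto
    moreover have "(1 - 4*d) * e - eps = (e - 2*eps) * (1 - 2*e) + eps"
      unfolding d_def by (simp add: algebra_simps)
    ultimately show ?thesis using assms(6) by linarith
  qed
  define lv :: "real^'n" where "lv = (\<chi> i. if u$i = 0 then 0 else 1 - d)"
  define hv :: "real^'n" where "hv = (\<chi> i. if u$i = 0 then d else 1)"
  have uv: "u$i = 0 \<or> u$i = 1" for i using u(1) unfolding vert_def by auto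
  have QW: "cbox lv hv \<subseteq> Wset mstar eps"
  proof
    fix z assume "z \<in> cbox lv hv"
    then have zb: "lv$i \<le> z$i \<and> z$i \<le> hv$i" for i by (simp add: mem_box_cart)
    have zc: "z \<in> unit_cube" unfolding unit_cube_def
    proof (intro CollectI allI)
      fix i show "0 \<le> z$i \<and> z$i \<le> 1" using zb[of i] uv[of i] d0 d4 unfolding lv_def hv_def
        by (auto split: if_splits)
    qed
    define w where "w = u + (1/(2*d)) *\<^sub>R (z - u)"
    have wi: "0 \<le> w$i \<and> w$i \<le> 1 \<and> \<bar>w$i - u$i\<bar> \<le> 1/2" for i
    proof (cases "u$i = 0")
      case True
      then have "0 \<le> z$i" "z$i \<le> d" using zb[of i] unfolding lv_def hv_def by auto
      moreover have "w$i = z$i / (2*d)" unfolding w_def using True by simp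
      moreover have "0 \<le> z$i/(2*d)" using d0 \<open>0 \<le> z$i\<close> by simp
      moreover have "z$i/(2*d) \<le> d/(2*d)" using d0 \<open>z$i \<le> d\<close> by (intro divide_right_mono) auto
      moreover have "d/(2*d) = 1/2" using d0 by simp
      ultimately show ?thesis using True by auto
    next
      case False
      then have u1: "u$i = 1" using uv by auto
      then have zz: "1 - d \<le> z$i" "z$i \<le> 1" using zb[of i] unfolding lv_def hv_def by auto
      have weq: "w$i = 1 + (z$i - 1) / (2*d)" unfolding w_def using u1 by simp
      have c1: "(z$i - 1)/(2*d) \<le> 0" using d0 \<open>z$i \<le> 1\<close> by (intro divide_nonpos_pos) auto
      have "-1/2 = (-d)/(2*d)" using d0 by simp
      also have "\<dots> \<le> (z$i - 1)/(2*d)" using d0 \<open>1 - d \<le> z$i\<close> by (intro divide_right_mono) auto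
      finally have c2: "-1/2 \<le> (z$i - 1)/(2*d)" .
      have aux: "\<And>w c::real. w = 1 + c \<Longrightarrow> c \<le> 0 \<Longrightarrow> -1/2 \<le> c \<Longrightarrow> 0 \<le> w \<and> w \<le> 1 \<and> \<bar>w - 1\<bar> \<le> 1/2"
        by auto
      show ?thesis using aux[OF weq c1 c2] u1 by (simp add: abs_if split: if_splits)
    qed
    have wc: "w \<in> unit_cube" unfolding unit_cube_def using wi by auto
    have uc: "u \<in> unit_cube" using u(1) vert_cube by auto
    have cm: "como u w" unfolding como_def
    proof (intro conjI allI impI)
      fix i j
      have wa: "w$k \<le> u$k + 1/2" "u$k - 1/2 \<le> w$k" for k using wi[of k] unfolding abs_le_iff by linarith+
      show "w$i \<le> w$j" if "u$i < u$j"
      proof -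
        have "u$i = 0" "u$j = 1" using that uv[of i] uv[of j] by auto
        then show ?thesis using wa[of i] wa[of j] by linarith
      qed
      show "u$i \<le> u$j" if "w$i < w$j"
      proof (rule ccontr)
        assume "\<not> u$i \<le> u$j"
        then have "u$i = 1" "u$j = 0" using uv[of i] uv[of j] by auto
        then show False using that wa[of i] wa[of j] by linarith
      qed
    qed
    have zeq: "z = (1 - 2*d) *\<^sub>R u + (2*d) *\<^sub>R w"
      unfolding w_def using d0 by (simp add: vec_eq_iff algebra_simps)
    have fz: "f z = (1 - 2*d) * f u + (2*d) * f w"
      unfolding zeq f_def by (rule Mclass_f_affine[OF mM uc wc cm]) (use d0 d4 in auto)
    have "\<bar>f w\<bar> \<le> M" using u(3)[OF wc] unfolding M_def .
    then have fw: "(2*d) * \<bar>f w\<bar> \<le> (2*d) * M" using d0 by (intro mult_left_mono) auto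
    have "(1 - 2*d) * f u = f z - (2*d) * f w" unfolding fz by simp
    then have "\<bar>(1 - 2*d) * f u\<bar> \<le> \<bar>f z\<bar> + \<bar>(2*d) * f w\<bar>" by (metis abs_triangle_ineq4)
    moreover have "\<bar>(1 - 2*d) * f u\<bar> = (1 - 2*d) * M" unfolding M_def abs_mult using d4 by simp
    moreover have "\<bar>(2*d) * f w\<bar> = (2*d) * \<bar>f w\<bar>" unfolding abs_mult using d0 by simp
    moreover have "(1 - 4*d) * M = (1 - 2*d) * M - (2*d) * M" by (simp add: algebra_simps)
    ultimately have "(1 - 4*d) * M \<le> \<bar>f z\<bar>" using fw by linarith
    then have "eps \<le> \<bar>maxf z - mstar z\<bar>" using key unfolding f_def by linarith
    then show "z \<in> Wset mstar eps" unfolding Wset_def using zc by auto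
  qed
  have Wmeas: "Wset mstar eps \<in> sets lborel"
  proof -
    have cube: "unit_cube = cbox (0::real^'n) 1"
      unfolding unit_cube_def by (auto simp: mem_box_cart)
    have mm: "mstar \<in> borel_measurable borel" by (rule Mclass_meas[OF mM])
    have "{x \<in> space borel. eps \<le> \<bar>maxf x - mstar x\<bar>} \<in> sets borel" using mm by measurable
    then have "unit_cube \<inter> {x \<in> space borel. eps \<le> \<bar>maxf x - mstar x\<bar>} \<in> sets borel"
      unfolding cube by (intro sets.Int) auto
    moreover have "Wset mstar eps = unit_cube \<inter> {x \<in> space borel. eps \<le> \<bar>maxf x - mstar x\<bar>}"
      unfolding Wset_def by auto
    ultimately show ?thesis by simp
  qed
  have ne: "cbox lv hv \<noteq> {}" using d0 d4 unfolding lv_def hv_def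
    by (subst interval_ne_empty_cart(1)) auto
  have "measure lborel (cbox lv hv) = (\<Prod>i\<in>UNIV. hv$i - lv$i)" by (rule content_cbox_cart[OF ne])
  also have "\<dots> = (\<Prod>i\<in>(UNIV::'n set). d)" unfolding lv_def hv_def by (intro prod.cong) auto
  also have "\<dots> = d ^ CARD('n)" by simp
  finally have cont: "measure lborel (cbox lv hv) = d ^ CARD('n)" .
  have "ennreal (d ^ CARD('n)) = emeasure lborel (cbox lv hv)"
    using emeasure_lborel_cbox_finite[of lv hv] cont by (simp add: emeasure_eq_ennreal_measure)
  also have "\<dots> \<le> emeasure lborel (Wset mstar eps)"
    by (rule emeasure_mono[OF QW Wmeas])
  finally show ?thesis unfolding d_def e_def by simp
qed

end
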